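(* Let $\{M_i\}_i\subseteq\mathbb C^{d_1\times d_1}$ be a finite family of matrices and let $\{N_i\}_i\subseteq\mathbb C^{d_2\times d_2}$ be Hermitian matrices (indexed by the same index set) satisfying $N_i^2=I_{d_2}$ and $\mathrm{Tr}[N_iN_j]=d_2\,\delta_{i,j}$. Then the operator $T=\sum_i M_i\otimes N_i$ satisfies $\|T\|\ge\|M_i\|$ for every $i$.
   Context: $\|\cdot\|$ denotes the operator norm and $\delta_{i,j}$ the Kronecker delta. *)

theory Defs
  imports "HOL-Analysis.Analysis"
begin

definition cadjoint :: "complex^'n^'m \<Rightarrow> complex^'m^'n" where
  "cadjoint A = (\<chi> i j. cnj (A $ j $ i))"

definition hermitian :: "complex^'n^'n \<Rightarrow> bool" where
  "hermitian A \<longleftrightarrow> cadjoint A = A"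

definition kron :: "complex^'n^'n \<Rightarrow> complex^'m^'m \<Rightarrow> complex^('n \<times> 'm)^('n \<times> 'm)" where
  "kron A B = (\<chi> p q. A $ fst p $ fst q * B $ snd p $ snd q)"

definition opnorm :: "complex^'n^'m \<Rightarrow> real" where
  "opnorm A = onorm (\<lambda>x. A *v x)"

end

theory Submission
  imports Defs
begin

lemma norm_vec_sq: "norm (v::'a::real_normed_vector^'n)^2 = (\<Sum>i\<in>UNIV. norm (v$i)^2)"
  by (simp add: norm_vec_def L2_set_def sum_nonneg)

lemma sum_pair_UNIV: "(\<Sum>q\<in>(UNIV::('a::finite\<times>'b::finite) set). f q) = (\<Sum>b\<in>UNIV. \<Sum>l\<in>UNIV. f (b,l))"
  by (simp add: UNIV_Times_UNIV[symmetric] sum.cartesian_product del: UNIV_Times_UNIV)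

lemma restrict_norm:
  fixes w :: "complex^('a::finite\<times>'b::finite)"
  shows "norm (\<chi> a. w $ (a,k)) \<le> norm w"
proof -
  have "(\<Sum>a\<in>UNIV. norm (w$(a,k))^2) = (\<Sum>p\<in>(\<lambda>a. (a,k)) ` UNIV. norm (w$p)^2)"
    by (subst sum.reindex) (auto simp: inj_on_def)
  also have "\<dots> \<le> (\<Sum>p\<in>UNIV. norm (w$p)^2)"
    by (rule sum_mono2) auto
  finally have "norm (\<chi> a. w $ (a,k))^2 \<le> norm w ^2"
    by (simp add: norm_vec_sq)
  then show ?thesis by (rule power2_le_imp_le) simp
qed

theorem lemma4p3:
  fixes I :: "'i set"
    and M :: "'i \<Rightarrow> complex^'d1^'d1"
    and N :: "'i \<Rightarrow> complex^'d2^'d2"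
  assumes "finite I"
    and "\<And>i. i \<in> I \<Longrightarrow> hermitian (N i)"
    and "\<And>i. i \<in> I \<Longrightarrow> N i ** N i = mat 1"
    and "\<And>i j. i \<in> I \<Longrightarrow> j \<in> I \<Longrightarrow>
           trace (N i ** N j) = (if i = j then of_nat CARD('d2) else 0)"
  shows "\<forall>i\<in>I. opnorm (M i) \<le> opnorm (\<Sum>j\<in>I. kron (M j) (N j))"
proof
  fix i assume iI: "i \<in> I"
  define T where "T = (\<Sum>j\<in>I. kron (M j) (N j))"
  define d where "d = CARD('d2)"
  have dpos: "d > 0" unfolding d_def by simp
  have Tc: "T $ p $ q = (\<Sum>j\<in>I. M j $ fst p $ fst q * N j $ snd p $ snd q)" for p q
    by (simp add: T_def kron_def)
  have colnorm: "(\<Sum>l\<in>UNIV. norm (N i $ l $ k)^2) = 1" for k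
  proof -
    have herm: "N i $ k $ l = cnj (N i $ l $ k)" for l
      using assms(2)[OF iI] unfolding hermitian_def cadjoint_def
      by (metis vec_lambda_beta)
    have "complex_of_real (\<Sum>l\<in>UNIV. norm (N i $ l $ k)^2) = (\<Sum>l\<in>UNIV. N i $ k $ l * N i $ l $ k)"
      unfolding of_real_sum
    proof (rule sum.cong[OF refl])
      fix l
      show "complex_of_real (norm (N i $ l $ k)^2) = N i $ k $ l * N i $ l $ k"
        unfolding herm[of l] complex_norm_square by (rule mult.commute)
    qed
    also have "\<dots> = (N i ** N i) $ k $ k" by (simp add: matrix_matrix_mult_def)
    also have "\<dots> = 1" using assms(3)[OF iI] by (simp add: mat_def)
    finally show ?thesis by (metis of_real_1 of_real_eq_iff)
  qed
  show "opnorm (M i) \<le> opnorm T"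
    unfolding opnorm_def
  proof (rule onorm_le)
    fix x :: "complex^'d1"
    define z where "z k = (\<chi> p. x $ fst p * N i $ snd p $ k)" for k
    define y where "y k = (\<chi> a. (T *v z k) $ (a,k))" for k
    have zn: "norm (z k) = norm x" for k
    proof -
      have "norm (z k)^2 = (\<Sum>b\<in>UNIV. \<Sum>l\<in>UNIV. norm (x$b)^2 * norm (N i $ l $ k)^2)"
        by (simp add: norm_vec_sq z_def sum_pair_UNIV norm_mult power_mult_distrib)
      also have "\<dots> = norm x ^2"
        by (simp add: sum_distrib_left[symmetric] colnorm norm_vec_sq)
      finally show ?thesis by (simp add: power2_eq_iff_nonneg)
    qed
    have yn: "norm (y k) \<le> onorm ((*v) T) * norm x" for k
    proof -
      have "norm (y k) \<le> norm (T *v z k)" unfolding y_def by (rule restrict_norm)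
      also have "\<dots> \<le> onorm ((*v) T) * norm (z k)" by (rule onorm) simp
      finally show ?thesis using zn by simp
    qed
    have key: "(\<Sum>k\<in>UNIV. (T *v z k) $ (a,k)) = of_nat d * (M i *v x) $ a" for a
    proof -
      have s1: "(T *v z k) $ (a,k) = (\<Sum>j\<in>I. \<Sum>b\<in>UNIV. \<Sum>l\<in>UNIV.
                   M j $ a $ b * x $ b * (N j $ k $ l * N i $ l $ k))" for k
      proof -
        have "(T *v z k) $ (a,k) = (\<Sum>b\<in>UNIV. \<Sum>l\<in>UNIV. \<Sum>j\<in>I.
                   M j $ a $ b * x $ b * (N j $ k $ l * N i $ l $ k))"
          by (simp add: matrix_vector_mult_def Tc z_def sum_pair_UNIV sum_distrib_right
              sum_distrib_left mult_ac)
        also have "\<dots> = (\<Sum>b\<in>UNIV. \<Sum>j\<in>I. \<Sum>l\<in>UNIV.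
                   M j $ a $ b * x $ b * (N j $ k $ l * N i $ l $ k))"
          by (rule sum.cong[OF refl], rule sum.swap)
        also have "\<dots> = (\<Sum>j\<in>I. \<Sum>b\<in>UNIV. \<Sum>l\<in>UNIV.
                   M j $ a $ b * x $ b * (N j $ k $ l * N i $ l $ k))"
          by (rule sum.swap)
        finally show ?thesis .
      qed
      have "(\<Sum>k\<in>UNIV. (T *v z k) $ (a,k)) = (\<Sum>j\<in>I. \<Sum>b\<in>UNIV.
                   M j $ a $ b * x $ b * (\<Sum>k\<in>UNIV. \<Sum>l\<in>UNIV. N j $ k $ l * N i $ l $ k))"
      proof -
        have "(\<Sum>k\<in>UNIV. (T *v z k) $ (a,k)) = (\<Sum>k\<in>UNIV. \<Sum>j\<in>I. \<Sum>b\<in>UNIV. \<Sum>l\<in>UNIV.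
                   M j $ a $ b * x $ b * (N j $ k $ l * N i $ l $ k))"
          by (simp only: s1)
        also have "\<dots> = (\<Sum>j\<in>I. \<Sum>k\<in>UNIV. \<Sum>b\<in>UNIV. \<Sum>l\<in>UNIV.
                   M j $ a $ b * x $ b * (N j $ k $ l * N i $ l $ k))"
          by (rule sum.swap)
        also have "\<dots> = (\<Sum>j\<in>I. \<Sum>b\<in>UNIV. \<Sum>k\<in>UNIV. \<Sum>l\<in>UNIV.
                   M j $ a $ b * x $ b * (N j $ k $ l * N i $ l $ k))"
          by (rule sum.cong[OF refl], rule sum.swap)
        also have "\<dots> = (\<Sum>j\<in>I. \<Sum>b\<in>UNIV.
                   M j $ a $ b * x $ b * (\<Sum>k\<in>UNIV. \<Sum>l\<in>UNIV. N j $ k $ l * N i $ l $ k))"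
          by (simp only: sum_distrib_left)
        finally show ?thesis .
      qed
      also have "\<dots> = (\<Sum>j\<in>I. \<Sum>b\<in>UNIV. M j $ a $ b * x $ b * trace (N j ** N i))"
        by (simp add: trace_def matrix_matrix_mult_def)
      also have "\<dots> = (\<Sum>j\<in>I. if j = i then of_nat d * (\<Sum>b\<in>UNIV. M j $ a $ b * x $ b) else 0)"
        by (rule sum.cong) (auto simp: assms(4) iI d_def sum_distrib_left mult_ac)
      also have "\<dots> = of_nat d * (M i *v x) $ a"
        using assms(1) iI by (simp add: sum.delta' matrix_vector_mult_def)
      finally show ?thesis .
    qed
    have Mx: "M i *v x = (1 / real d) *\<^sub>R (\<Sum>k\<in>UNIV. y k)"
    unfolding vec_eq_iff proof (rule allI)
      fix a
      have "((1 / real d) *\<^sub>R (\<Sum>k\<in>UNIV. y k)) $ a = (1 / real d) *\<^sub>R (of_nat d * (M i *v x) $ a)"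
        by (simp add: y_def key)
      also have "\<dots> = (M i *v x) $ a"
        using dpos by (simp add: scaleR_conv_of_real)
      finally show "(M i *v x) $ a = ((1 / real d) *\<^sub>R (\<Sum>k\<in>UNIV. y k)) $ a" by simp
    qed
    have "norm (M i *v x) = (1 / real d) * norm (\<Sum>k\<in>UNIV. y k)"
      by (simp add: Mx)
    also have "\<dots> \<le> (1 / real d) * (\<Sum>k\<in>UNIV. norm (y k))"
      by (intro mult_left_mono norm_sum) simp
    also have "\<dots> \<le> (1 / real d) * (\<Sum>k\<in>(UNIV::'d2 set). onorm ((*v) T) * norm x)"
      by (intro mult_left_mono sum_mono yn) simp
    also have "\<dots> = onorm ((*v) T) * norm x"
      using dpos by (simp add: d_def)
    finally show "norm (M i *v x) \<le> onorm ((*v) T) * norm x" .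
  qed
qed

end
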